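(* Let $n\ge 4$, $N=\{1,\dots,n\}$, fix distinct $i_1,i_2\in N$ and let $\hat N^c=N\setminus\{i_1,i_2\}$. Then the inequality $$x_{i_2i_1}+\sum_{j\in\hat N^c}\left(x_{i_1j}+x_{ji_1}\right)-\sum_{j\in\hat N^c}x_{i_2j}-\sum_{j,j'\in\hat N^c:\,j\ne j'} x_{jj'}\le 2-\frac{(n-3)(n-4)}{2}$$ defines a facet of the weak order polytope $P^n_{WO}$.
   Context: Let $N=\{1,\dots,n\}$ and $A_N=\{(i,j): i,j\in N, i\ne j\}$. A weak order on $N$ is a binary relation $W\subseteq N\times N$ that is reflexive, transitive and total; $(i,j)\in W$ is read "$i$ is preferred over or tied with $j$". The characteristic vector of $W$ is $x^W\in\{0,1\}^{A_N}$ with $x^W_{(i,j)}=1$ if $(i,j)\in W$ and $0$ otherwise. The weak order polytope $P^n_{WO}$ is the convex hull of the characteristic vectors of all weak orders on $N$; its points are vectors $x\in\mathbb{R}^{A_N}$ and $x_{ij}$ denotes the coordinate $x_{(i,j)}$. $P^n_{WO}$ has dimension $n(n-1)$. An inequality $\pi x\le\pi_0$ defines a facet of a polytope $P$ if it is valid for $P$ (holds for all $x\in P$) and the face $P\cap\{x:\pi x=\pi_0\}$ is nonempty, proper, and contains $\dim(P)$ affinely independent points. *)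

theory Defs
  imports "HOL-Analysis.Analysis"
begin

text \<open>Points of R^{A_N} are
represented as vectors in real^('n \<times> 'n) whose diagonal coordinates are 0 for all
relevant points (the characteristic vectors); this is an affine-isomorphic copy of
R^{A_N}, so dimensions and affine independence are unchanged.\<close>

definition weak_order :: "('n \<times> 'n) set \<Rightarrow> bool" where
  "weak_order W \<longleftrightarrow> refl W \<and> trans W \<and> total W"

definition char_vec :: "('n::finite \<times> 'n) set \<Rightarrow> real ^ ('n \<times> 'n)" where
  "char_vec W = (\<chi> a. if fst a \<noteq> snd a \<and> a \<in> W then 1 else 0)"

definition weak_order_polytope :: "(real ^ ('n::finite \<times> 'n)) set" where
  "weak_order_polytope = convex hull {char_vec W | W. weak_order W}"

definition defines_facet :: "'a::euclidean_space set \<Rightarrow> 'a \<Rightarrow> real \<Rightarrow> bool" where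
  "defines_facet P \<pi> \<pi>0 \<longleftrightarrow>
     (\<forall>x\<in>P. \<pi> \<bullet> x \<le> \<pi>0) \<and>
     (let F = P \<inter> {x. \<pi> \<bullet> x = \<pi>0} in
        F \<noteq> {} \<and> F \<noteq> P \<and>
        (\<exists>S. S \<subseteq> F \<and> finite S \<and> card S = nat (aff_dim P) \<and> \<not> affine_dependent S))"

end

theory Submission
  imports Defs
begin


definition ind :: "bool \<Rightarrow> real" where "ind b = (if b then 1 else 0)"

locale wctx =
  fixes i1 i2 :: "'n::finite"
  assumes dist: "i1 \<noteq> i2" and card4: "CARD('n) \<ge> 4"
begin

definition Nc :: "'n set" where "Nc = UNIV - {i1, i2}"
definition Dp :: "('n \<times> 'n) set" where "Dp = {(j, j'). j \<in> Nc \<and> j' \<in> Nc \<and> j \<noteq> j'}"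
definition piv :: "real ^ ('n \<times> 'n)" where
  "piv = axis (i2, i1) 1
                 + (\<Sum>j\<in>Nc. axis (i1, j) 1 + axis (j, i1) 1)
                 - (\<Sum>j\<in>Nc. axis (i2, j) 1)
                 - (\<Sum>p\<in>Dp. axis p 1)"
definition rhs :: real where "rhs = 2 - (real CARD('n) - 3) * (real CARD('n) - 4) / 2"

definition mm :: real where "mm = real (card Nc)"

lemma card_Nc: "card Nc = CARD('n) - 2"
  unfolding Nc_def using dist by (simp add: card_Diff_subset)

lemma mm_eq: "mm = real CARD('n) - 2"
  unfolding mm_def card_Nc using card4 by simp

lemma mm_ge: "mm \<ge> 2" using mm_eq card4 by simp

lemma rhs_eq: "rhs = mm + 1 - (mm * (mm - 1)) / 2"
  unfolding rhs_def mm_eq by (simp add: field_simps)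

lemma Dp_Sigma: "Dp = Sigma Nc (\<lambda>j. Nc - {j})"
  unfolding Dp_def by auto

lemma card_Dp: "real (card Dp) = mm * (mm - 1)"
proof -
  have "card Dp = (\<Sum>j\<in>Nc. card (Nc - {j}))"
    unfolding Dp_Sigma by (rule card_SigmaI) auto
  also have "\<dots> = (\<Sum>j\<in>Nc. card Nc - 1)"
    by (rule sum.cong) (auto simp: card_Diff_singleton)
  also have "\<dots> = card Nc * (card Nc - 1)" by simp
  finally show ?thesis unfolding mm_def using card_Nc card4
    by (simp add: of_nat_diff)
qed

lemma piv_inner: "piv \<bullet> x = x$(i2,i1) + (\<Sum>j\<in>Nc. x$(i1,j) + x$(j,i1)) - (\<Sum>j\<in>Nc. x$(i2,j))
   - (\<Sum>p\<in>Dp. x$p)"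
  unfolding piv_def by (simp add: inner_diff_left inner_add_left inner_sum_left inner_axis' sum.distrib)

lemma sum_swap: "(\<Sum>p\<in>Dp. f p) = (\<Sum>p\<in>Dp. f (snd p, fst p))"
  by (rule sum.reindex_bij_witness[where i="\<lambda>p. (snd p, fst p)" and j="\<lambda>p. (snd p, fst p)"])
     (auto simp: Dp_def)

lemma sum_half: "(\<Sum>p\<in>Dp. (x::real^('n\<times>'n))$p) = (\<Sum>p\<in>Dp. x$p + x$(snd p, fst p)) / 2"
  using sum_swap[of "\<lambda>p. x$p"] by (simp add: sum.distrib)

lemma nat_quad: "real t * (real t - 1) \<ge> 0 \<and> real t * (real t - 1) \<ge> 2 * real t - 2"
proof (cases "t \<le> 1")
  case True then have "t = 0 \<or> t = 1" by auto
  then show ?thesis by auto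
next
  case False
  then have "(real t - 1) * (real t - 2) \<ge> 0" by (intro mult_nonneg_nonneg) auto
  moreover have "real t * (real t - 1) \<ge> 0" using False by (intro mult_nonneg_nonneg) auto
  ultimately show ?thesis by (simp add: algebra_simps)
qed

lemma final_arith:
  fixes x21 s2 t tt m mm2 SD PI :: real
  assumes "x21 = 0 \<or> x21 = 1" "s2 \<ge> x21 * t" "SD \<ge> (mm2 + tt) / 2" "tt \<ge> 0" "tt \<ge> 2*t - 2"
    "PI = x21 + (m + t) - s2 - SD"
  shows "PI \<le> m + 1 - mm2 / 2"
  using assms by auto

lemma valid:
  assumes wo: "weak_order W"
  shows "piv \<bullet> char_vec W \<le> rhs"
proof -
  define x where "x = char_vec W"
  have xn: "\<And>a b. x$(a,b) = (if a \<noteq> b \<and> (a,b) \<in> W then 1 else 0)"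
    by (simp add: x_def char_vec_def)
  have tr: "\<And>a b c. (a,b) \<in> W \<Longrightarrow> (b,c) \<in> W \<Longrightarrow> (a,c) \<in> W"
    using wo unfolding weak_order_def trans_def by blast
  have tot: "\<And>a b. a \<noteq> b \<Longrightarrow> (a,b) \<in> W \<or> (b,a) \<in> W"
    using wo unfolding weak_order_def total_on_def by blast
  define T1 where "T1 = {j\<in>Nc. (i1,j) \<in> W \<and> (j,i1) \<in> W}"
  define t where "t = card T1"
  have T1sub: "T1 \<subseteq> Nc" unfolding T1_def by auto
  have fin: "finite T1" by simp
  have i1Nc: "i1 \<notin> Nc" "i2 \<notin> Nc" unfolding Nc_def by auto
  have h1: "(\<Sum>j\<in>Nc. x$(i1,j) + x$(j,i1)) = (\<Sum>j\<in>Nc. 1 + ind (j \<in> T1))"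
  proof (rule sum.cong)
    fix j assume j: "j \<in> Nc"
    then have "j \<noteq> i1" using i1Nc by auto
    then show "x$(i1,j) + x$(j,i1) = 1 + ind (j \<in> T1)"
      using tot[of i1 j] j unfolding xn ind_def T1_def by auto
  qed simp
  have indsum: "(\<Sum>j\<in>Nc. ind (j \<in> T1)) = real t"
  proof -
    have "(\<Sum>j\<in>Nc. ind (j \<in> T1)) = real (card (Nc \<inter> T1))"
      by (simp add: ind_def sum.If_cases)
    also have "Nc \<inter> T1 = T1" using T1sub by auto
    finally show ?thesis unfolding t_def .
  qed
  have h1': "(\<Sum>j\<in>Nc. x$(i1,j) + x$(j,i1)) = mm + real t"
  proof -
    have "(\<Sum>j\<in>Nc. 1 + ind (j \<in> T1)) = mm + real t"
      using indsum by (simp add: sum.distrib mm_def)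
    then show ?thesis using h1 by simp
  qed
  have h2: "(\<Sum>j\<in>Nc. x$(i2,j)) \<ge> x$(i2,i1) * real t"
  proof -
    have "(\<Sum>j\<in>Nc. x$(i2,j)) \<ge> (\<Sum>j\<in>Nc. x$(i2,i1) * ind (j \<in> T1))"
    proof (rule sum_mono)
      fix j assume j: "j \<in> Nc"
      then have "j \<noteq> i2" using i1Nc by auto
      then show "x$(i2,i1) * ind (j \<in> T1) \<le> x$(i2,j)"
        using tr[of i2 i1 j] unfolding xn ind_def T1_def by auto
    qed
    then show ?thesis using indsum by (simp add: sum_distrib_left[symmetric])
  qed
  have h4: "(\<Sum>p\<in>Dp. x$p + x$(snd p, fst p)) \<ge> (\<Sum>p\<in>Dp. 1 + ind (p \<in> T1 \<times> T1))"
  proof (rule sum_mono)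
    fix p assume p: "p \<in> Dp"
    obtain a b where ab: "p = (a,b)" by (cases p)
    with p have "a \<noteq> b" unfolding Dp_def by auto
    then show "1 + ind (p \<in> T1 \<times> T1) \<le> x$p + x$(snd p, fst p)"
      using tot[of a b] tr[of a i1 b] tr[of b i1 a] unfolding ab xn ind_def T1_def by auto
  qed
  have h5: "(\<Sum>p\<in>Dp. 1 + ind (p \<in> T1 \<times> T1)) = mm * (mm - 1) + real t * (real t - 1)"
  proof -
    have "(\<Sum>p\<in>Dp. ind (p \<in> T1 \<times> T1)) = real (card (Dp \<inter> (T1 \<times> T1)))"
      by (simp add: ind_def sum.If_cases)
    also have "Dp \<inter> (T1 \<times> T1) = Sigma T1 (\<lambda>j. T1 - {j})"
      using T1sub unfolding Dp_def by auto
    also have "card (Sigma T1 (\<lambda>j. T1 - {j})) = (\<Sum>j\<in>T1. card (T1 - {j}))"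
      by (rule card_SigmaI) auto
    also have "\<dots> = (\<Sum>j\<in>T1. t - 1)"
      by (rule sum.cong) (auto simp: card_Diff_singleton t_def)
    also have "\<dots> = t * (t - 1)" by (simp add: t_def)
    finally have "(\<Sum>p\<in>Dp. ind (p \<in> T1 \<times> T1)) = real t * (real t - 1)"
      by (cases t) (auto simp: algebra_simps)
    then show ?thesis by (simp add: sum.distrib card_Dp)
  qed
  have x21: "x$(i2,i1) = 0 \<or> x$(i2,i1) = 1" unfolding xn by auto
  have "piv \<bullet> x \<le> mm + 1 - (mm * (mm - 1)) / 2"
    apply (rule final_arith[OF x21 h2, where SD="\<Sum>p\<in>Dp. x$p" and tt="real t * (real t - 1)"])
    using sum_half[of x] h4 h5 nat_quad[of t] piv_inner[of x] h1' by auto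
  then show ?thesis unfolding x_def rhs_eq .
qed

end



lemma vec_pair_eqI: "(\<And>u v. (A::real^('a::finite\<times>'a)) $ (u,v) = B $ (u,v)) \<Longrightarrow> A = B"
  by (simp add: vec_eq_iff)

context wctx begin

definition oth :: "'n \<Rightarrow> int" where "oth x = - int (to_nat x) - 10"
definition Rk :: "'n \<Rightarrow> 'n \<Rightarrow> int \<Rightarrow> int \<Rightarrow> int \<Rightarrow> int \<Rightarrow> 'n \<Rightarrow> int" where
  "Rk j k rk rj r1 r2 x = (if x = i1 then r1 else if x = i2 then r2 else if x = j then rj
      else if x = k then rk else oth x)"
definition cv :: "('n \<Rightarrow> int) \<Rightarrow> real^('n\<times>'n)" where "cv r = char_vec {(a,b). r a \<le> r b}"

lemma cv_nth: "cv r $ (a,b) = (if a \<noteq> b \<and> r a \<le> r b then 1 else 0)"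
  by (simp add: cv_def char_vec_def)

lemma cv_wo: "weak_order {(a,b). (r::'n\<Rightarrow>int) a \<le> r b}"
  unfolding weak_order_def refl_on_def trans_def total_on_def by auto

lemma oth_le: "oth x \<le> -10" by (simp add: oth_def)
lemma oth_inj: "oth x = oth y \<longleftrightarrow> x = y"
  using inj_to_nat[where 'a='n] by (auto simp: oth_def inj_eq)

lemma Nc_ne: "j \<in> Nc \<Longrightarrow> j \<noteq> i1 \<and> j \<noteq> i2" by (auto simp: Nc_def)

lemma D1: assumes "j \<in> Nc" "k \<in> Nc" "j \<noteq> k"
  shows "cv (Rk j k (-2) 0 (-2) 5) - cv (Rk j k (-2) 0 0 5) = axis (i1,k) 1 - axis (j,i1) 1" (is "?L = ?R")
proof (rule vec_pair_eqI)
  fix u v show "?L $ (u,v) = ?R $ (u,v)"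
    using oth_le[of u] oth_le[of v] assms Nc_ne[OF assms(1)] Nc_ne[OF assms(2)] dist
    by (auto simp: cv_nth Rk_def axis_def)
qed

lemma D2: assumes "j \<in> Nc" "k \<in> Nc" "j \<noteq> k"
  shows "cv (Rk j k (-2) (-2) (-2) 5) - cv (Rk j k (-2) 0 (-2) 5) = axis (j,k) 1 + axis (j,i1) 1" (is "?L = ?R")
proof (rule vec_pair_eqI)
  fix u v show "?L $ (u,v) = ?R $ (u,v)"
    using oth_le[of u] oth_le[of v] assms Nc_ne[OF assms(1)] Nc_ne[OF assms(2)] dist
    by (auto simp: cv_nth Rk_def axis_def)
qed

lemma D3: assumes "j \<in> Nc" "k \<in> Nc" "j \<noteq> k"
  shows "cv (Rk j k (-2) 0 5 5) - cv (Rk j k (-2) 0 6 5) = axis (i1,i2) 1" (is "?L = ?R")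
proof (rule vec_pair_eqI)
  fix u v show "?L $ (u,v) = ?R $ (u,v)"
    using oth_le[of u] oth_le[of v] assms Nc_ne[OF assms(1)] Nc_ne[OF assms(2)] dist
    by (auto simp: cv_nth Rk_def axis_def)
qed

lemma D4: assumes "j \<in> Nc" "k \<in> Nc" "j \<noteq> k"
  shows "cv (Rk j k (-2) 0 0 0) - cv (Rk j k (-2) 0 0 (-1)) = axis (j,i2) 1 + axis (i1,i2) 1" (is "?L = ?R")
proof (rule vec_pair_eqI)
  fix u v show "?L $ (u,v) = ?R $ (u,v)"
    using oth_le[of u] oth_le[of v] assms Nc_ne[OF assms(1)] Nc_ne[OF assms(2)] dist
    by (auto simp: cv_nth Rk_def axis_def)
qed

lemma D5: assumes "j \<in> Nc" "k \<in> Nc" "j \<noteq> k"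
  shows "cv (Rk j k (-2) 0 0 (-1)) - cv (Rk j k (-2) 0 0 5) = axis (i2,j) 1 + axis (i2,i1) 1 - axis (j,i2) 1 - axis (i1,i2) 1" (is "?L = ?R")
proof (rule vec_pair_eqI)
  fix u v show "?L $ (u,v) = ?R $ (u,v)"
    using oth_le[of u] oth_le[of v] assms Nc_ne[OF assms(1)] Nc_ne[OF assms(2)] dist
    by (auto simp: cv_nth Rk_def axis_def)
qed

lemma D6: assumes "j \<in> Nc" "k \<in> Nc" "j \<noteq> k"
  shows "cv (Rk j k (-2) 0 0 5) - cv (Rk j k (-2) 0 6 5) = axis (i1,j) 1 + axis (i1,i2) 1 - axis (i2,i1) 1" (is "?L = ?R")
proof (rule vec_pair_eqI)
  fix u v show "?L $ (u,v) = ?R $ (u,v)"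
    using oth_le[of u] oth_le[of v] assms Nc_ne[OF assms(1)] Nc_ne[OF assms(2)] dist
    by (auto simp: cv_nth Rk_def axis_def)
qed

lemma D7: assumes "j \<in> Nc" "k \<in> Nc" "j \<noteq> k"
  shows "cv (Rk j k (-2) 0 (-1) 5) - cv (Rk j k (-2) 0 0 5) = - axis (j,i1) 1" (is "?L = ?R")
proof (rule vec_pair_eqI)
  fix u v show "?L $ (u,v) = ?R $ (u,v)"
    using oth_le[of u] oth_le[of v] assms Nc_ne[OF assms(1)] Nc_ne[OF assms(2)] dist
    by (auto simp: cv_nth Rk_def axis_def)
qed

end



context wctx begin

lemma c1: "(\<Sum>j\<in>Nc. axis (i1, j) (1::real)) $ (u,v) = ind (u = i1 \<and> v \<in> Nc)"
  by (cases "u = i1") (auto simp: sum_component axis_def ind_def)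
lemma c2: "(\<Sum>j\<in>Nc. axis (j, i1) (1::real)) $ (u,v) = ind (u \<in> Nc \<and> v = i1)"
  by (cases "v = i1") (auto simp: sum_component axis_def ind_def)
lemma c3: "(\<Sum>j\<in>Nc. axis (i2, j) (1::real)) $ (u,v) = ind (u = i2 \<and> v \<in> Nc)"
  by (cases "u = i2") (auto simp: sum_component axis_def ind_def)
lemma c4: "(\<Sum>p\<in>Dp. axis p (1::real)) $ (u,v) = ind ((u,v) \<in> Dp)"
proof -
  have "(\<Sum>p\<in>Dp. axis p (1::real)) $ (u,v) = (\<Sum>p\<in>Dp. if (u,v) = p then 1 else 0)"
    by (simp add: sum_component axis_def)
  also have "\<dots> = ind ((u,v) \<in> Dp)" by (simp add: ind_def)
  finally show ?thesis .
qed

lemma piv_nth: "piv $ (u,v) = ind ((u,v) = (i2,i1)) + ind (u = i1 \<and> v \<in> Nc) + ind (u \<in> Nc \<and> v = i1)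
   - ind (u = i2 \<and> v \<in> Nc) - ind ((u,v) \<in> Dp)"
  unfolding piv_def by (simp only: vector_minus_component vector_add_component sum.distrib c1 c2 c3 c4)
    (simp add: axis_def ind_def)

end



context wctx begin

lemma pv: assumes "j \<in> Nc" "k \<in> Nc" "j \<noteq> k"
  shows "piv $ (i2,i1) = 1" "piv $ (i1,i2) = 0" "piv $ (i1,j) = 1" "piv $ (j,i1) = 1"
    "piv $ (i2,j) = -1" "piv $ (j,i2) = 0" "piv $ (j,k) = -1"
  using assms dist by (auto simp: piv_nth ind_def Nc_def Dp_def)

lemma pv_diag: "piv $ (u,u) = 0"
  using dist by (auto simp: piv_nth ind_def Nc_def Dp_def)

lemma P2_tight: assumes "j \<in> Nc" "k \<in> Nc" "j \<noteq> k"
  shows "piv \<bullet> cv (Rk j k (-2) 0 0 5) = rhs"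
proof -
  define r where "r = Rk j k (-2) 0 0 5"
  define x where "x = cv r"
  note ne = Nc_ne[OF assms(1)] Nc_ne[OF assms(2)]
  have a1: "x $ (i2,i1) = 0" using dist by (simp add: x_def cv_nth r_def Rk_def)
  have a2: "(\<Sum>j'\<in>Nc. x$(i1,j') + x$(j',i1)) = (\<Sum>j'\<in>Nc. 1 + ind (j' = j))"
  proof (rule sum.cong)
    fix j' assume j': "j' \<in> Nc"
    show "x$(i1,j') + x$(j',i1) = 1 + ind (j' = j)"
      using Nc_ne[OF j'] ne dist oth_le[of j'] by (auto simp: x_def cv_nth r_def Rk_def ind_def)
  qed simp
  have a2': "(\<Sum>j'\<in>Nc. 1 + ind (j' = j)) = mm + 1"
    using assms(1) by (simp add: sum.distrib ind_def mm_def)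
  have a3: "(\<Sum>j'\<in>Nc. x$(i2,j')) = 0"
  proof (rule sum.neutral, rule ballI)
    fix j' assume j': "j' \<in> Nc"
    show "x$(i2,j') = 0"
      using Nc_ne[OF j'] ne dist oth_le[of j'] by (auto simp: x_def cv_nth r_def Rk_def)
  qed
  have a4: "(\<Sum>p\<in>Dp. x$p + x$(snd p, fst p)) = (\<Sum>p\<in>Dp. 1)"
  proof (rule sum.cong)
    fix p assume p: "p \<in> Dp"
    obtain a b where ab: "p = (a,b)" by (cases p)
    with p have abN: "a \<in> Nc" "b \<in> Nc" "a \<noteq> b" unfolding Dp_def by auto
    have "r a \<noteq> r b"
      using Nc_ne[OF abN(1)] Nc_ne[OF abN(2)] abN(3) ne oth_le[of a] oth_le[of b] oth_inj[of a b]
      by (auto simp: r_def Rk_def)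
    then show "x$p + x$(snd p, fst p) = 1"
      using abN(3) by (auto simp: ab x_def cv_nth)
  qed simp
  have "piv \<bullet> x = mm + 1 - (mm * (mm - 1)) / 2"
    using piv_inner[of x] sum_half[of x] a1 a2 a2' a3 a4 card_Dp by simp
  then show ?thesis unfolding x_def r_def rhs_eq .
qed

lemma pd: "piv \<bullet> (a - b) = piv \<bullet> a - piv \<bullet> b" by (simp add: inner_diff_right)
lemma pax: "piv \<bullet> axis p 1 = piv $ p" by (simp add: inner_axis)

lemma tight_all: assumes "j \<in> Nc" "k \<in> Nc" "j \<noteq> k"
  shows "piv \<bullet> cv (Rk j k (-2) 0 (-2) 5) = rhs"
    "piv \<bullet> cv (Rk j k (-2) (-2) (-2) 5) = rhs"
    "piv \<bullet> cv (Rk j k (-2) 0 6 5) = rhs"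
    "piv \<bullet> cv (Rk j k (-2) 0 5 5) = rhs"
    "piv \<bullet> cv (Rk j k (-2) 0 0 (-1)) = rhs"
    "piv \<bullet> cv (Rk j k (-2) 0 0 0) = rhs"
    "piv \<bullet> cv (Rk j k (-2) 0 (-1) 5) = rhs - 1"
proof -
  note P2 = P2_tight[OF assms]
  note v = pv[OF assms] pv[OF assms(2,1) assms(3)[symmetric]]
  have e1: "piv \<bullet> cv (Rk j k (-2) 0 (-2) 5) - piv \<bullet> cv (Rk j k (-2) 0 0 5) = 0"
    using arg_cong[OF D1[OF assms], of "\<lambda>z. piv \<bullet> z"] v by (simp add: pd inner_add_right pax)
  show s1: "piv \<bullet> cv (Rk j k (-2) 0 (-2) 5) = rhs" using e1 P2 by simp
  have e2: "piv \<bullet> cv (Rk j k (-2) (-2) (-2) 5) - piv \<bullet> cv (Rk j k (-2) 0 (-2) 5) = 0"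
    using arg_cong[OF D2[OF assms], of "\<lambda>z. piv \<bullet> z"] v by (simp add: pd inner_add_right pax)
  show "piv \<bullet> cv (Rk j k (-2) (-2) (-2) 5) = rhs" using e2 s1 by simp
  have e6: "piv \<bullet> cv (Rk j k (-2) 0 0 5) - piv \<bullet> cv (Rk j k (-2) 0 6 5) = 0"
    using arg_cong[OF D6[OF assms], of "\<lambda>z. piv \<bullet> z"] v by (simp add: pd inner_add_right pax)
  show s4: "piv \<bullet> cv (Rk j k (-2) 0 6 5) = rhs" using e6 P2 by simp
  have e3: "piv \<bullet> cv (Rk j k (-2) 0 5 5) - piv \<bullet> cv (Rk j k (-2) 0 6 5) = 0"
    using arg_cong[OF D3[OF assms], of "\<lambda>z. piv \<bullet> z"] v by (simp add: pd inner_add_right pax)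
  show "piv \<bullet> cv (Rk j k (-2) 0 5 5) = rhs" using e3 s4 by simp
  have e5: "piv \<bullet> cv (Rk j k (-2) 0 0 (-1)) - piv \<bullet> cv (Rk j k (-2) 0 0 5) = 0"
    using arg_cong[OF D5[OF assms], of "\<lambda>z. piv \<bullet> z"] v by (simp add: pd inner_add_right pax)
  show s6: "piv \<bullet> cv (Rk j k (-2) 0 0 (-1)) = rhs" using e5 P2 by simp
  have e4: "piv \<bullet> cv (Rk j k (-2) 0 0 0) - piv \<bullet> cv (Rk j k (-2) 0 0 (-1)) = 0"
    using arg_cong[OF D4[OF assms], of "\<lambda>z. piv \<bullet> z"] v by (simp add: pd inner_add_right pax)
  show "piv \<bullet> cv (Rk j k (-2) 0 0 0) = rhs" using e4 s6 by simp
  have e7: "piv \<bullet> cv (Rk j k (-2) 0 (-1) 5) - piv \<bullet> cv (Rk j k (-2) 0 0 5) = -1"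
    using arg_cong[OF D7[OF assms], of "\<lambda>z. piv \<bullet> z"] v by (simp add: pd inner_add_right pax)
  show "piv \<bullet> cv (Rk j k (-2) 0 (-1) 5) = rhs - 1" using e7 P2 by simp
qed

end



context wctx begin

lemma other_in_Nc: assumes "j \<in> Nc" shows "\<exists>k\<in>Nc. k \<noteq> j"
proof (rule ccontr)
  assume "\<not> ?thesis"
  then have "Nc \<subseteq> {j}" by auto
  then have "card Nc \<le> 1" using card_mono[of "{j}" Nc] by simp
  then show False using mm_ge mm_def by simp
qed

lemma Nc_two: "\<exists>j k. j \<in> Nc \<and> k \<in> Nc \<and> j \<noteq> k"
proof -
  have "Nc \<noteq> {}" using mm_ge mm_def by auto
  then obtain j where "j \<in> Nc" by auto
  with other_in_Nc show ?thesis by blast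
qed

lemma ann_coef:
  assumes H: "\<And>r. piv \<bullet> cv r = rhs \<Longrightarrow> y \<bullet> cv r = cc" and uv: "u \<noteq> v"
  shows "y $ (u,v) = y $ (i2,i1) * piv $ (u,v)"
proof -
  define lam where "lam = y $ (i2,i1)"
  have yd: "y \<bullet> (a - b) = y \<bullet> a - y \<bullet> b" for a b by (simp add: inner_diff_right)
  have yax: "y \<bullet> axis p 1 = y $ p" for p by (simp add: inner_axis)
  have E: "y \<bullet> (cv r - cv r') = 0" if "piv \<bullet> cv r = rhs" "piv \<bullet> cv r' = rhs" for r r'
    using H[OF that(1)] H[OF that(2)] by (simp add: yd)
  have F: "y $ (i1,i2) = 0 \<and> y $ (j,i2) = 0 \<and> y $ (i2,j) = - lam \<and> y $ (i1,j) = lam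
     \<and> y $ (j,i1) = lam \<and> y $ (j,k) = - lam" if jk: "j \<in> Nc" "k \<in> Nc" "j \<noteq> k" for j k
  proof -
    note T = tight_all[OF jk] P2_tight[OF jk]
    have f3: "y $ (i1,i2) = 0"
      using E[OF T(4) T(3)] D3[OF jk] by (simp add: yax)
    have f4: "y $ (j,i2) = 0"
      using E[OF T(6) T(5)] D4[OF jk] f3 by (simp add: yax inner_add_right)
    have f5: "y $ (i2,j) = - lam"
      using E[OF T(5) T(8)] D5[OF jk] f3 f4 by (simp add: yax inner_add_right inner_diff_right lam_def)
    have f6: "y $ (i1,j) = lam"
      using E[OF T(8) T(3)] D6[OF jk] f3 by (simp add: yax inner_add_right inner_diff_right lam_def)
    have f6': "y $ (i1,k) = lam"
    proof -
      note T' = tight_all[OF jk(2,1) jk(3)[symmetric]] P2_tight[OF jk(2,1) jk(3)[symmetric]]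
      show ?thesis
        using E[OF T'(8) T'(3)] D6[OF jk(2,1) jk(3)[symmetric]] f3
        by (simp add: yax inner_add_right inner_diff_right lam_def)
    qed
    have f1: "y $ (j,i1) = lam"
      using E[OF T(1) T(8)] D1[OF jk] f6' by (simp add: yax inner_add_right inner_diff_right)
    have f2: "y $ (j,k) = - lam"
      using E[OF T(2) T(1)] D2[OF jk] f1 by (simp add: yax inner_add_right inner_diff_right)
    show ?thesis using f1 f2 f3 f4 f5 f6 by simp
  qed
  have ex: "\<exists>k\<in>Nc. k \<noteq> j" if "j \<in> Nc" for j using other_in_Nc that .
  have cases: "u \<in> Nc \<or> u = i1 \<or> u = i2" for u by (auto simp: Nc_def)
  show ?thesis
  proof -
    consider "u = i1" "v = i2" | "u = i2" "v = i1" | "u = i1" "v \<in> Nc" | "u \<in> Nc" "v = i1"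
      | "u = i2" "v \<in> Nc" | "u \<in> Nc" "v = i2" | "u \<in> Nc" "v \<in> Nc"
      using cases[of u] cases[of v] uv by blast
    then show ?thesis
    proof cases
      case 1
      obtain j k where "j \<in> Nc" "k \<in> Nc" "j \<noteq> k" using Nc_two by blast
      then show ?thesis using 1 F pv by (simp add: lam_def)
    next
      case 2 then show ?thesis using pv_diag dist by (simp add: piv_nth ind_def Nc_def Dp_def)
    next
      case 3 then obtain k where "k \<in> Nc" "k \<noteq> v" using ex by blast
      then show ?thesis using 3 F[of v k] pv[of v k] by (simp add: lam_def)
    next
      case 4 then obtain k where "k \<in> Nc" "k \<noteq> u" using ex by blast
      then show ?thesis using 4 F[of u k] pv[of u k] by (simp add: lam_def)
    next
      case 5 then obtain k where "k \<in> Nc" "k \<noteq> v" using ex by blast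
      then show ?thesis using 5 F[of v k] pv[of v k] by (simp add: lam_def)
    next
      case 6 then obtain k where "k \<in> Nc" "k \<noteq> u" using ex by blast
      then show ?thesis using 6 F[of u k] pv[of u k] by (simp add: lam_def)
    next
      case 7 then show ?thesis using uv F[of u v] pv[of u v] by (simp add: lam_def)
    qed
  qed
qed

definition Bd :: "(real^('n\<times>'n)) set" where "Bd = (\<lambda>i. axis (i,i) 1) ` UNIV"

lemma ann_span:
  assumes H: "\<And>r. piv \<bullet> cv r = rhs \<Longrightarrow> y \<bullet> cv r = cc"
  shows "y \<in> span (insert piv Bd)"
proof -
  have eq: "y = y $ (i2,i1) *\<^sub>R piv + (\<Sum>i\<in>UNIV. y $ (i,i) *\<^sub>R axis (i,i) 1)"
  proof (rule vec_pair_eqI)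
    fix u v
    have s: "(\<Sum>i\<in>UNIV. y $ (i,i) *\<^sub>R axis (i,i) (1::real)) $ (u,v) = (if u = v then y $ (u,u) else 0)"
    proof (cases "u = v")
      case True
      have h: "\<And>a::real. \<And>P. a * (if P then 1 else 0) = (if P then a else 0)" by simp
      show ?thesis using True by (simp add: sum_component axis_def h)
    next
      case False
      then show ?thesis by (auto simp: sum_component axis_def intro!: sum.neutral)
    qed
    show "y $ (u,v) = (y $ (i2,i1) *\<^sub>R piv + (\<Sum>i\<in>UNIV. y $ (i,i) *\<^sub>R axis (i,i) 1)) $ (u,v)"
    proof -
      have e: "(y $ (i2,i1) *\<^sub>R piv + (\<Sum>i\<in>UNIV. y $ (i,i) *\<^sub>R axis (i,i) 1)) $ (u,v)
         = y $ (i2,i1) * piv $ (u,v) + (if u = v then y $ (u,u) else 0)"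
        unfolding vector_add_component vector_scaleR_component s by simp
      show ?thesis unfolding e using ann_coef[OF H, of u v] pv_diag[of u] by (cases "u = v") auto
    qed
  qed
  have "y $ (i2,i1) *\<^sub>R piv + (\<Sum>i\<in>UNIV. y $ (i,i) *\<^sub>R axis (i,i) 1) \<in> span (insert piv Bd)"
    by (intro span_add span_mul span_sum span_base) (auto simp: Bd_def span_base)
  then show ?thesis using eq by simp
qed

end



context wctx begin

lemma facet: "defines_facet (weak_order_polytope :: (real^('n\<times>'n)) set) piv rhs"
proof -
  define V where "V = {char_vec W | W::('n\<times>'n) set. weak_order W}"
  define P where "P = (weak_order_polytope :: (real^('n\<times>'n)) set)"
  have P_def': "P = convex hull V" by (simp add: P_def V_def weak_order_polytope_def)
  have cvV: "cv r \<in> V" for r unfolding V_def cv_def using cv_wo by blast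
  have VP: "V \<subseteq> P" unfolding P_def' by (rule hull_subset)
  have validP: "\<forall>x\<in>P. piv \<bullet> x \<le> rhs"
  proof -
    have "V \<subseteq> {x. piv \<bullet> x \<le> rhs}" using valid unfolding V_def by auto
    then have "P \<subseteq> {x. piv \<bullet> x \<le> rhs}" unfolding P_def'
      by (rule hull_minimal) (rule convex_halfspace_le)
    then show ?thesis by auto
  qed
  obtain j0 k0 where jk0: "j0 \<in> Nc" "k0 \<in> Nc" "j0 \<noteq> k0" using Nc_two by blast
  define Tset where "Tset = {v\<in>V. piv \<bullet> v = rhs}"
  define t0 where "t0 = cv (Rk j0 k0 (-2) 0 0 5)"
  have t0T: "t0 \<in> Tset" unfolding Tset_def t0_def using cvV P2_tight[OF jk0] by auto
  define Q where "Q = cv (Rk j0 k0 (-2) 0 (-1) 5)"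
  have QP: "Q \<in> P" using cvV VP unfolding Q_def by auto
  have Qv: "piv \<bullet> Q = rhs - 1" unfolding Q_def using tight_all(7)[OF jk0] .
  define N where "N = CARD('n)"
  have N4: "N \<ge> 4" using card4 N_def by simp
  define U where "U = (+) (- t0) ` Tset"
  have affT: "aff_dim Tset = int (dim U)"
    unfolding U_def by (rule aff_dim_eq_dim) (rule hull_inc[OF t0T])
  define Ann where "Ann = {y \<in> UNIV. \<forall>x\<in>span U. orthogonal x y}"
  have dsum: "dim Ann + dim (span U) = dim (UNIV :: (real^('n\<times>'n)) set)"
    unfolding Ann_def by (rule dim_subspace_orthogonal_to_vectors) (auto simp: subspace_span)
  have dimUNIV: "dim (UNIV::(real^('n\<times>'n)) set) = N*N"
    by (simp add: dim_UNIV N_def card_prod)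
  have AnnSub: "Ann \<subseteq> span (insert piv Bd)"
  proof
    fix y assume y: "y \<in> Ann"
    show "y \<in> span (insert piv Bd)"
    proof (rule ann_span[where cc = "y \<bullet> t0"])
      fix r assume r: "piv \<bullet> cv r = rhs"
      then have "cv r \<in> Tset" unfolding Tset_def using cvV by auto
      then have "- t0 + cv r \<in> span U" unfolding U_def by (intro span_base) auto
      then have "orthogonal (- t0 + cv r) y" using y unfolding Ann_def by auto
      then show "y \<bullet> cv r = y \<bullet> t0"
        by (simp add: orthogonal_def inner_diff_left inner_commute[of t0 y] inner_commute[of "cv r" y])
    qed
  qed
  have cardB: "card (insert piv Bd) \<le> N + 1"
  proof -
    have "card Bd \<le> N" unfolding Bd_def N_def by (rule card_image_le) simp
    moreover have "finite Bd" unfolding Bd_def by simp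
    then have "card (insert piv Bd) \<le> card Bd + 1" by (simp add: card_insert_if)
    ultimately show ?thesis by simp
  qed
  have finB: "finite (insert piv Bd)" unfolding Bd_def by simp
  have dimAnn: "dim Ann \<le> N + 1" using dim_le_card[OF AnnSub finB] cardB by simp
  have dimU: "dim U + N + 1 \<ge> N * N" using dsum dimUNIV dimAnn by (simp add: dim_span)
  define Dg where "Dg = {y \<in> UNIV. \<forall>x\<in>span Bd. orthogonal x y}"
  have dsum2: "dim Dg + dim (span Bd) = dim (UNIV :: (real^('n\<times>'n)) set)"
    unfolding Dg_def by (rule dim_subspace_orthogonal_to_vectors) (auto simp: subspace_span)
  have indB: "independent Bd"
  proof (rule pairwise_orthogonal_independent)
    show "pairwise orthogonal Bd"
      unfolding pairwise_def Bd_def orthogonal_def by (auto simp: inner_axis_axis)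
    show "0 \<notin> Bd"
    proof
      assume "0 \<in> Bd"
      then obtain i where "axis (i,i) (1::real) = 0" unfolding Bd_def by auto
      then show False by simp
    qed
  qed
  have cardBd: "card Bd = N"
    unfolding Bd_def N_def by (rule card_image) (auto simp: inj_on_def axis_eq_axis)
  have dimDg: "dim Dg = N * N - N"
    using dsum2 dimUNIV dim_span_eq_card_independent[OF indB] cardBd by simp
  have subDg: "subspace Dg"
  proof -
    have "Dg = {y. \<forall>x\<in>span Bd. orthogonal x y}" unfolding Dg_def by simp
    then show ?thesis using subspace_orthogonal_to_vectors by simp
  qed
  have VDg: "V \<subseteq> Dg"
  proof
    fix v assume "v \<in> V"
    then obtain W where v: "v = char_vec W" unfolding V_def by auto
    show "v \<in> Dg" unfolding Dg_def
    proof (simp, intro ballI)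
      fix x assume x: "x \<in> span Bd"
      have "orthogonal v x"
      proof (rule orthogonal_to_span[OF x])
        fix y assume "y \<in> Bd"
        then obtain i where "y = axis (i,i) 1" unfolding Bd_def by auto
        then show "orthogonal v y" unfolding v orthogonal_def
          by (simp add: inner_axis char_vec_def)
      qed
      then show "orthogonal x v" by (simp add: orthogonal_commute)
    qed
  qed
  have PDg: "P \<subseteq> Dg" unfolding P_def' by (rule hull_minimal[OF VDg]) (rule subspace_imp_convex[OF subDg])
  have affP_le: "aff_dim P \<le> int (N * N - N)"
    using aff_dim_subset[OF PDg] aff_dim_subspace[OF subDg] dimDg by simp
  have hyp: "affine hull Tset \<subseteq> {x. piv \<bullet> x = rhs}"
    by (rule hull_minimal) (auto simp: Tset_def affine_hyperplane)
  have Qn: "Q \<notin> affine hull Tset" using hyp Qv by auto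
  have TP: "Tset \<subseteq> P" using VP unfolding Tset_def by auto
  have affins: "aff_dim (insert Q Tset) = aff_dim Tset + 1" using aff_dim_insert[of Q Tset] Qn by simp
  have "aff_dim (insert Q Tset) \<le> aff_dim P" using QP TP by (intro aff_dim_subset) auto
  then have le1: "aff_dim Tset + 1 \<le> aff_dim P" using affins by simp
  have NN: "N \<le> N * N" using N4 by simp
  define M where "M = N * N"
  have dimU2: "int M \<le> int (dim U) + int N + 1" using dimU unfolding M_def by linarith
  have affP_le2: "aff_dim P \<le> int M - int N"
    using affP_le NN unfolding M_def[symmetric] by (simp add: of_nat_diff)
  have affP: "aff_dim P = int M - int N" and affTs: "aff_dim Tset = int M - int N - 1"
    using le1 affP_le2 affT dimU2 by linarith+
  obtain S where S: "S \<subseteq> Tset" "\<not> affine_dependent S" "affine hull Tset = affine hull S"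
    using affine_basis_exists[of Tset] by blast
  have "aff_dim S = aff_dim Tset" using S(3) by (metis aff_dim_affine_hull)
  then have cS: "int (card S) = aff_dim P"
    using aff_dim_affine_independent[OF S(2)] affP affTs by simp
  have finS: "finite S" using aff_independent_finite[OF S(2)] .
  have SF: "S \<subseteq> P \<inter> {x. piv \<bullet> x = rhs}" using S(1) TP unfolding Tset_def by auto
  have Fne: "P \<inter> {x. piv \<bullet> x = rhs} \<noteq> {}" using t0T TP unfolding Tset_def by auto
  have FP: "P \<inter> {x. piv \<bullet> x = rhs} \<noteq> P"
  proof
    assume "P \<inter> {x. piv \<bullet> x = rhs} = P"
    then have "Q \<in> P \<inter> {x. piv \<bullet> x = rhs}" using QP by simp
    then show False using Qv by simp
  qed
  show ?thesis
    unfolding defines_facet_def Let_def P_def[symmetric]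
    using validP Fne FP SF finS cS S(2) by (intro conjI) (auto intro!: exI[of _ S])
qed

end

theorem mainTheorem9:
  fixes i1 i2 :: "'n::finite"
  assumes "CARD('n) \<ge> 4" and "i1 \<noteq> i2"
  shows "let Nc = UNIV - {i1, i2};
             \<pi> = axis (i2, i1) 1
                 + (\<Sum>j\<in>Nc. axis (i1, j) 1 + axis (j, i1) 1)
                 - (\<Sum>j\<in>Nc. axis (i2, j) 1)
                 - (\<Sum>p\<in>{(j, j'). j \<in> Nc \<and> j' \<in> Nc \<and> j \<noteq> j'}. axis p 1)
         in defines_facet (weak_order_polytope :: (real ^ ('n \<times> 'n)) set) \<pi>
              (2 - (real CARD('n) - 3) * (real CARD('n) - 4) / 2)"
proof -
  interpret wctx i1 i2 using assms by unfold_locales auto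
  show ?thesis using facet unfolding Let_def piv_def Dp_def Nc_def rhs_def .
qed


end
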